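(* Assume $M_h=\mathbb{P}_1$ (so $\Phi_h=M_h$). Then any solution $(\phi^{n+1},\mu^{n+1})\in\Phi_h\times M_h$ of the J$_\varepsilon$-scheme satisfies $$\delta_t\Big(\int_\Omega I_h(J_\varepsilon(\phi^{n+1}))\,d\boldsymbol x\Big)\le\int_\Omega M^J_\varepsilon(\phi^{n+1})|\nabla\mu^{n+1}|^2\,d\boldsymbol x+\int_\Omega|\nabla\phi^{n+1}|^2\,d\boldsymbol x,$$ where $M^J_\varepsilon(\phi^{n+1})|\nabla\mu^{n+1}|^2$ means $(M^J_\varepsilon(\phi^{n+1})\nabla\mu^{n+1})\cdot\nabla\mu^{n+1}$. Moreover, $$\int_\Omega I_h(J_\varepsilon(\phi^{n+1}))\,d\boldsymbol x\le C_1+C_2\,T,$$ where $C_1,C_2$ depend on the initial energy $E(\phi^0)$ and on $\int_\Omega I_h(J_\varepsilon(\phi^0))\,d\boldsymbol x$.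
   Context: $\Omega\subset\mathbb{R}^d$ ($d=1,2,3$) bounded, $\eta>0$, $\varepsilon\in(0,1/2)$. $F(\phi)=\frac1{4\eta^2}\phi^2(\phi-1)^2=F_c+F_e$ with $F_c(\phi)=\frac1{4\eta^2}(\phi^4-2\phi^3+\frac32\phi^2)$, $F_e(\phi)=-\frac1{8\eta^2}\phi^2$; $E(\phi)=\int_\Omega(\frac12|\nabla\phi|^2+F(\phi))d\boldsymbol x$. The interval $[0,T]$ is split into $N$ steps, $\Delta t=T/N$, $\delta_tf^{n+1}=(f^{n+1}-f^n)/\Delta t$, $n=0,\dots,N-1$. $\mathcal T_h$ is a structured triangulation of $\Omega$ in which every element $I$ has vertices $\boldsymbol x_0,\dots,\boldsymbol x_d$ with $\boldsymbol x_k-\boldsymbol x_0$ parallel to the $k$-th coordinate axis. $\Phi_h$ is the space of continuous piecewise $\mathbb{P}_1$ functions, $M_h$ the space of continuous piecewise $\mathbb{P}_k$ functions. $I_h$ is nodal $\mathbb{P}_1$ interpolation, $(f,g)_h=\int_\Omega I_h(fg)\,d\boldsymbol x$, $(\cdot,\cdot)$ the $L^2$ product. $J(\phi)=(1-2\phi)\arcsin(\sqrt{1-\phi})+\sqrt{(1-\phi)\phi}+2\arcsin(\sqrt{1/2})\,\phi$ on $[0,1]$ (so $J''(\phi)=1/\sqrt{\phi(1-\phi)}$); $J_\varepsilon\in C^2(\mathbb{R})$ equals $J$ on $[\varepsilon,1-\varepsilon]$ and its second-order Taylor polynomial at $\varepsilon$ (resp. $1-\varepsilon$) for $\phi<\varepsilon$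 (resp. $\phi>1-\varepsilon$). For $\phi\in\Phi_h$, $M^J_\varepsilon(\phi)$ is the piecewise constant diagonal matrix whose $k$-th entry on $I$ is $\Big(\frac{\phi(\boldsymbol x_k)-\phi(\boldsymbol x_0)}{J_\varepsilon'(\phi(\boldsymbol x_k))-J_\varepsilon'(\phi(\boldsymbol x_0))}\Big)^2$ if $\phi(\boldsymbol x_k)\neq\phi(\boldsymbol x_0)$ and $\big(1/J_\varepsilon''(\phi(\boldsymbol x_0))\big)^2$ otherwise. J$_\varepsilon$-scheme: given $\phi^n\in\Phi_h$ (starting from $\phi^0\in\Phi_h$), find $(\phi^{n+1},\mu^{n+1})\in\Phi_h\times M_h$ such that for all $(\bar\phi,\bar\mu)\in\Phi_h\times M_h$: $\frac1{\Delta t}(\phi^{n+1}-\phi^n,\bar\mu)_h+(M^J_\varepsilon(\phi^{n+1})\nabla\mu^{n+1},\nabla\bar\mu)=0$ and $(\nabla\phi^{n+1},\nabla\bar\phi)+(F_c'(\phi^{n+1})+F_e'(\phi^n),\bar\phi)=(\mu^{n+1},\bar\phi)_h$. *)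

theory Defs
  imports "HOL-Analysis.Analysis"
begin

definition Fc :: "real \<Rightarrow> real \<Rightarrow> real" where
  "Fc \<eta> p = (1 / (4 * \<eta>^2)) * (p^4 - 2 * p^3 + (3/2) * p^2)"

definition Fe :: "real \<Rightarrow> real \<Rightarrow> real" where
  "Fe \<eta> p = - (1 / (8 * \<eta>^2)) * p^2"

definition Fpot :: "real \<Rightarrow> real \<Rightarrow> real" where
  "Fpot \<eta> p = (1 / (4 * \<eta>^2)) * p^2 * (p - 1)^2"

definition Jfun :: "real \<Rightarrow> real" where
  "Jfun p = (1 - 2 * p) * arcsin (sqrt (1 - p)) + sqrt ((1 - p) * p)
            + 2 * arcsin (sqrt (1/2)) * p"

definition Jeps :: "real \<Rightarrow> real \<Rightarrow> real" where
  "Jeps \<epsilon> p =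
     (if p < \<epsilon> then Jfun \<epsilon> + deriv Jfun \<epsilon> * (p - \<epsilon>) + deriv (deriv Jfun) \<epsilon> / 2 * (p - \<epsilon>)^2
      else if p > 1 - \<epsilon> then Jfun (1 - \<epsilon>) + deriv Jfun (1 - \<epsilon>) * (p - (1 - \<epsilon>))
                 + deriv (deriv Jfun) (1 - \<epsilon>) / 2 * (p - (1 - \<epsilon>))^2
      else Jfun p)"

text \<open>An element is a pair (x0, h): its vertices are x0 and x0 + (h.b) b for each
  coordinate unit vector b (so x_k - x_0 is parallel to the k-th axis).\<close>

type_synonym 'a elem = "'a \<times> 'a"

definition vtx :: "'a::euclidean_space elem \<Rightarrow> 'a \<Rightarrow> 'a" where
  "vtx I b = fst I + (snd I \<bullet> b) *\<^sub>R b"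

definition verts :: "'a::euclidean_space elem \<Rightarrow> 'a set" where
  "verts I = insert (fst I) (vtx I ` Basis)"

definition cell :: "'a::euclidean_space elem \<Rightarrow> 'a set" where
  "cell I = convex hull (verts I)"

definition struct_triang :: "'a::euclidean_space elem set \<Rightarrow> bool" where
  "struct_triang \<T> \<longleftrightarrow> finite \<T>
     \<and> (\<forall>I\<in>\<T>. \<forall>b\<in>Basis. snd I \<bullet> b \<noteq> 0)
     \<and> inj_on cell \<T>
     \<and> (\<forall>I\<in>\<T>. \<forall>I'\<in>\<T>. I \<noteq> I' \<longrightarrow> cell I \<inter> cell I' = convex hull (verts I \<inter> verts I'))"

definition P1 :: "'a::euclidean_space elem set \<Rightarrow> ('a \<Rightarrow> real) \<Rightarrow> bool" where
  "P1 \<T> f \<longleftrightarrow> continuous_on (\<Union>(cell ` \<T>)) f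
     \<and> (\<forall>I\<in>\<T>. \<exists>a c. \<forall>x\<in>cell I. f x = a \<bullet> x + c)"

definition grad :: "('a::euclidean_space \<Rightarrow> real) \<Rightarrow> 'a \<Rightarrow> 'a" where
  "grad f x = (SOME D. GDERIV f x :> D)"

definition interp_cell :: "'a::euclidean_space elem \<Rightarrow> ('a \<Rightarrow> real) \<Rightarrow> 'a \<Rightarrow> real" where
  "interp_cell I g x = g (fst I)
     + (\<Sum>b\<in>Basis. ((x - fst I) \<bullet> b / (snd I \<bullet> b)) * (g (vtx I b) - g (fst I)))"

definition Ih :: "'a::euclidean_space elem set \<Rightarrow> ('a \<Rightarrow> real) \<Rightarrow> 'a \<Rightarrow> real" where
  "Ih \<T> g x = (if \<exists>I\<in>\<T>. x \<in> cell I
               then interp_cell (SOME I. I \<in> \<T> \<and> x \<in> cell I) g x else 0)"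

definition lumped :: "'a::euclidean_space elem set \<Rightarrow> 'a set \<Rightarrow> ('a \<Rightarrow> real) \<Rightarrow> ('a \<Rightarrow> real) \<Rightarrow> real" where
  "lumped \<T> \<Omega> f g = integral \<Omega> (Ih \<T> (\<lambda>x. f x * g x))"

text \<open>b-th diagonal entry of M^J_eps(phi) on element I.\<close>
definition MJ :: "real \<Rightarrow> ('a::euclidean_space \<Rightarrow> real) \<Rightarrow> 'a elem \<Rightarrow> 'a \<Rightarrow> real" where
  "MJ \<epsilon> \<phi> I b =
     (if \<phi> (vtx I b) \<noteq> \<phi> (fst I)
      then ((\<phi> (vtx I b) - \<phi> (fst I)) /
            (deriv (Jeps \<epsilon>) (\<phi> (vtx I b)) - deriv (Jeps \<epsilon>) (\<phi> (fst I))))^2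
      else (1 / deriv (deriv (Jeps \<epsilon>)) (\<phi> (fst I)))^2)"

definition mob_form :: "real \<Rightarrow> 'a::euclidean_space elem set \<Rightarrow> ('a \<Rightarrow> real) \<Rightarrow> ('a \<Rightarrow> real) \<Rightarrow> ('a \<Rightarrow> real) \<Rightarrow> real" where
  "mob_form \<epsilon> \<T> \<phi> \<mu> \<mu>b =
     (\<Sum>I\<in>\<T>. integral (cell I)
        (\<lambda>x. \<Sum>b\<in>Basis. MJ \<epsilon> \<phi> I b * (grad \<mu> x \<bullet> b) * (grad \<mu>b x \<bullet> b)))"

definition energy :: "real \<Rightarrow> 'a::euclidean_space set \<Rightarrow> ('a \<Rightarrow> real) \<Rightarrow> real" where
  "energy \<eta> \<Omega> \<phi> = integral \<Omega> (\<lambda>x. (1/2) * (norm (grad \<phi> x))^2 + Fpot \<eta> (\<phi> x))"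

definition Jscheme_step :: "real \<Rightarrow> real \<Rightarrow> 'a::euclidean_space elem set \<Rightarrow> 'a set \<Rightarrow> real
    \<Rightarrow> ('a \<Rightarrow> real) \<Rightarrow> ('a \<Rightarrow> real) \<Rightarrow> ('a \<Rightarrow> real) \<Rightarrow> bool" where
  "Jscheme_step \<eta> \<epsilon> \<T> \<Omega> dt \<phi>old \<phi>new \<mu>new \<longleftrightarrow>
     P1 \<T> \<phi>new \<and> P1 \<T> \<mu>new
     \<and> (\<forall>\<mu>b. P1 \<T> \<mu>b \<longrightarrow>
          (1 / dt) * lumped \<T> \<Omega> (\<lambda>x. \<phi>new x - \<phi>old x) \<mu>b + mob_form \<epsilon> \<T> \<phi>new \<mu>new \<mu>b = 0)
     \<and> (\<forall>\<phi>b. P1 \<T> \<phi>b \<longrightarrow>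
          integral \<Omega> (\<lambda>x. grad \<phi>new x \<bullet> grad \<phi>b x)
          + integral \<Omega> (\<lambda>x. (deriv (Fc \<eta>) (\<phi>new x) + deriv (Fe \<eta>) (\<phi>old x)) * \<phi>b x)
          = lumped \<T> \<Omega> \<mu>new \<phi>b)"

end

theory Submission
  imports Defs
begin
definition Jd :: "real \<Rightarrow> real" where
  "Jd p = 2 * arcsin (sqrt (1/2)) - 2 * arcsin (sqrt (1 - p))"

lemma Jfun_deriv:
  assumes "0 < p" "p < 1"
  shows "(Jfun has_real_derivative Jd p) (at p)"
proof -
  have s1: "sqrt (1 - p) < 1" "0 < sqrt (1-p)" "0 < sqrt p" using assms by auto
  have sq: "(sqrt (1 - p))^2 = 1 - p" using assms by simp
  have d2: "((\<lambda>p. arcsin (sqrt (1 - p))) has_real_derivative (- 1 / (2 * sqrt p * sqrt (1 - p)))) (at p)"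
  proof -
    have "((\<lambda>p. arcsin (sqrt (1 - p))) has_real_derivative
       inverse (sqrt (1 - (sqrt (1 - p))\<^sup>2)) * (inverse (sqrt (1-p)) / 2 * (0 - 1))) (at p)"
  proof -
    have i: "((\<lambda>p. 1 - p) has_real_derivative (0 - 1)) (at p)" by (intro derivative_intros)
    have ds: "((\<lambda>p. sqrt (1 - p)) has_real_derivative inverse (sqrt (1-p)) / 2 * (0 - 1)) (at p)"
      using DERIV_chain2[OF DERIV_real_sqrt i] assms by simp
    show ?thesis using DERIV_chain2[OF DERIV_arcsin ds] s1 by simp
  qed
    also have "inverse (sqrt (1 - (sqrt (1 - p))\<^sup>2)) * (inverse (sqrt (1-p)) / 2 * (0 - 1))
       = - 1 / (2 * sqrt p * sqrt (1 - p))" using sq s1 by (simp add: field_simps)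
    finally show ?thesis .
  qed
  have d3: "((\<lambda>p. sqrt ((1 - p) * p)) has_real_derivative ((1 - 2*p) / (2 * sqrt p * sqrt (1 - p)))) (at p)"
  proof -
    have "((\<lambda>p. sqrt ((1 - p) * p)) has_real_derivative
       inverse (sqrt ((1-p)*p)) / 2 * ((0 - 1) * p + (1 - p) * 1)) (at p)"
    proof -
      have i: "((\<lambda>p. (1 - p) * p) has_real_derivative ((0 - 1) * p + (1 - p) * 1)) (at p)"
        using DERIV_mult[OF DERIV_diff[OF DERIV_const DERIV_ident] DERIV_ident, of 1 p] by simp
      show ?thesis using DERIV_chain2[OF DERIV_real_sqrt i] assms by simp
    qed
    also have "inverse (sqrt ((1-p)*p)) / 2 * ((0 - 1) * p + (1 - p) * 1) = (1 - 2*p) / (2 * sqrt p * sqrt (1 - p))"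
    proof -
      have "sqrt ((1-p)*p) = sqrt p * sqrt (1-p)" by (simp add: real_sqrt_mult)
      then show ?thesis using s1 by (simp add: field_simps)
    qed
    finally show ?thesis .
  qed
  have "(Jfun has_real_derivative
     ((0 - 2 * 1) * arcsin (sqrt (1 - p)) + (1 - 2*p) * (- 1 / (2 * sqrt p * sqrt (1 - p)))
      + (1 - 2*p) / (2 * sqrt p * sqrt (1 - p)) + 2 * arcsin (sqrt (1/2)) * 1)) (at p)"
  proof -
    have e: "Jfun = (\<lambda>z. (1-2*z)*arcsin(sqrt(1-z)) + sqrt((1-z)*z) + 2*arcsin(sqrt(1/2))*z)"
      by (simp add: Jfun_def fun_eq_iff)
    have d1: "((\<lambda>z. 1 - 2*z) has_real_derivative (0 - 2*1)) (at p)"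
      by (rule DERIV_diff[OF DERIV_const DERIV_cmult[OF DERIV_ident]])
    have d4: "((\<lambda>z. 2*arcsin(sqrt(1/2))*z) has_real_derivative 2*arcsin(sqrt(1/2))*1) (at p)"
      by (rule DERIV_cmult[OF DERIV_ident])
    show ?thesis unfolding e
      using DERIV_add[OF DERIV_add[OF DERIV_mult[OF d1 d2] d3] d4] by simp
  qed
  also have "((0 - 2 * 1) * arcsin (sqrt (1 - p)) + (1 - 2*p) * (- 1 / (2 * sqrt p * sqrt (1 - p)))
      + (1 - 2*p) / (2 * sqrt p * sqrt (1 - p)) + 2 * arcsin (sqrt (1/2)) * 1) = Jd p"
    unfolding Jd_def by (simp add: field_simps)
  finally show ?thesis .
qed

lemma Jd_deriv:
  assumes "0 < p" "p < 1"
  shows "(Jd has_real_derivative 1 / (sqrt p * sqrt (1 - p))) (at p)"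
proof -
  have s1: "sqrt (1 - p) < 1" "0 < sqrt (1-p)" "0 < sqrt p" using assms by auto
  have sq: "(sqrt (1 - p))^2 = 1 - p" using assms by simp
  have "((\<lambda>p. arcsin (sqrt (1 - p))) has_real_derivative
       inverse (sqrt (1 - (sqrt (1 - p))\<^sup>2)) * (inverse (sqrt (1-p)) / 2 * (0 - 1))) (at p)"
  proof -
    have i: "((\<lambda>p. 1 - p) has_real_derivative (0 - 1)) (at p)" by (intro derivative_intros)
    have ds: "((\<lambda>p. sqrt (1 - p)) has_real_derivative inverse (sqrt (1-p)) / 2 * (0 - 1)) (at p)"
      using DERIV_chain2[OF DERIV_real_sqrt i] assms by simp
    show ?thesis using DERIV_chain2[OF DERIV_arcsin ds] s1 by simp
  qed
  then have "(Jd has_real_derivative 0 - 2 * (inverse (sqrt (1 - (sqrt (1 - p))\<^sup>2)) * (inverse (sqrt (1-p)) / 2 * (0 - 1)))) (at p)"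
    unfolding Jd_def[abs_def] by (intro DERIV_diff DERIV_const DERIV_cmult)
  also have "0 - 2 * (inverse (sqrt (1 - (sqrt (1 - p))\<^sup>2)) * (inverse (sqrt (1-p)) / 2 * (0 - 1))) = 1 / (sqrt p * sqrt (1 - p))"
    using sq s1 by (simp add: field_simps)
  finally show ?thesis .
qed

definition Jdd :: "real \<Rightarrow> real" where
  "Jdd p = 1 / (sqrt p * sqrt (1 - p))"

lemma deriv_Jfun: "0 < p \<Longrightarrow> p < 1 \<Longrightarrow> deriv Jfun p = Jd p"
  using Jfun_deriv DERIV_imp_deriv by blast

lemma deriv_deriv_Jfun:
  assumes "0 < p" "p < 1" shows "deriv (deriv Jfun) p = Jdd p"
proof -
  have "(deriv Jfun has_real_derivative Jdd p) (at p)"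
    by (rule has_field_derivative_transform_within_open[OF Jd_deriv[OF assms, folded Jdd_def],
          of "{0<..<1}"]) (use assms deriv_Jfun in auto)
  then show ?thesis by (rule DERIV_imp_deriv)
qed

lemma Jdd_pos: "0 < p \<Longrightarrow> p < 1 \<Longrightarrow> 0 < Jdd p"
  unfolding Jdd_def by simp

lemma Jd_mono: "0 < p \<Longrightarrow> p \<le> q \<Longrightarrow> q < 1 \<Longrightarrow> Jd p \<le> Jd q"
  unfolding Jd_def by (auto simp: arcsin_le_mono)

definition JD :: "real \<Rightarrow> real \<Rightarrow> real" where
  "JD e p = (if p < e then Jd e + Jdd e * (p - e)
             else if p > 1 - e then Jd (1 - e) + Jdd (1 - e) * (p - (1 - e))
             else Jd p)"

lemma Jeps_eq:
  assumes "0 < e" "e < 1/2"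
  shows "Jeps e p = (if p < e then Jfun e + Jd e * (p - e) + Jdd e / 2 * (p - e)^2
      else if p > 1 - e then Jfun (1 - e) + Jd (1 - e) * (p - (1 - e))
                 + Jdd (1 - e) / 2 * (p - (1 - e))^2
      else Jfun p)"
  using assms unfolding Jeps_def by (simp add: deriv_Jfun deriv_deriv_Jfun)

lemma quad_deriv:
  "((\<lambda>p. A + B * (p - c) + C / 2 * (p - c)^2) has_real_derivative (B + C * (x - c))) (at x)"
proof -
  have "((\<lambda>p. A + B * (p - c) + C / 2 * (p - c)^2) has_real_derivative
     (0 + B * (1 - 0) + C / 2 * (of_nat 2 * (x - c) ^ (2 - 1) * (1 - 0)))) (at x)"
  proof -
    have sq: "((\<lambda>p. (p-c)^2) has_real_derivative real 2 * (x-c)^(2-1) * (1-0)) (at x)"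
      by (auto intro!: derivative_eq_intros)
    have l: "((\<lambda>p. A + B * (p - c)) has_real_derivative 0 + B * (1 - 0)) (at x)"
      by (rule DERIV_add[OF DERIV_const DERIV_cmult[OF DERIV_diff[OF DERIV_ident DERIV_const]]])
    show ?thesis by (rule DERIV_add[OF l DERIV_cmult[OF sq, of "C/2"]])
  qed
  then show ?thesis by (rule DERIV_cong) (simp add: algebra_simps)
qed

lemma deriv_glue:
  fixes f :: "real \<Rightarrow> real"
  assumes "(f has_real_derivative D) (at x within {..x})" "(f has_real_derivative D) (at x within {x..})"
  shows "(f has_real_derivative D) (at x)"
proof -
  have "((\<lambda>y. (f y - f x) / (y - x)) \<longlongrightarrow> D) (at x within {..x} \<union> {x..})"
    using assms by (intro Lim_Un) (auto simp: has_field_derivative_iff)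
  moreover have "{..x} \<union> {x..} = UNIV" by auto
  ultimately show ?thesis by (simp add: has_field_derivative_iff)
qed

lemma Jeps_deriv:
  assumes e: "0 < e" "e < 1/2"
  shows "(Jeps e has_real_derivative JD e p) (at p)"
proof -
  define Q1 where "Q1 = (\<lambda>p. Jfun e + Jd e * (p - e) + Jdd e / 2 * (p - e)^2)"
  define Q2 where "Q2 = (\<lambda>p. Jfun (1 - e) + Jd (1 - e) * (p - (1 - e)) + Jdd (1 - e) / 2 * (p - (1 - e))^2)"
  have JE: "Jeps e = (\<lambda>p. if p < e then Q1 p else if p > 1 - e then Q2 p else Jfun p)"
    using Jeps_eq[OF e] unfolding Q1_def Q2_def by (simp add: fun_eq_iff)
  have dQ1: "\<And>x. (Q1 has_real_derivative Jd e + Jdd e * (x - e)) (at x)"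
    unfolding Q1_def by (rule quad_deriv)
  have dQ2: "\<And>x. (Q2 has_real_derivative Jd (1 - e) + Jdd (1 - e) * (x - (1 - e))) (at x)"
    unfolding Q2_def by (rule quad_deriv)
  consider "p < e" | "p = e" | "e < p \<and> p < 1 - e" | "p = 1 - e" | "p > 1 - e" by linarith
  then show ?thesis
  proof cases
    case 1
    have "(Jeps e has_real_derivative Jd e + Jdd e * (p - e)) (at p)"
      by (rule has_field_derivative_transform_within_open[OF dQ1, of "{..<e}"]) (use 1 JE in auto)
    then show ?thesis using 1 by (simp add: JD_def)
  next
    case 2
    have dQ1': "(Q1 has_real_derivative Jd p) (at p)" using dQ1[of p] 2 by simp
    have a: "(Jeps e has_real_derivative Jd p) (at p within {..p})"
      apply (rule has_field_derivative_transform_within[OF has_field_derivative_at_within[OF dQ1'], of 1])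
      using 2 e by (auto simp: JE Q1_def)
    have b: "(Jeps e has_real_derivative Jd p) (at p within {p..})"
      apply (rule has_field_derivative_transform_within[OF has_field_derivative_at_within[OF Jfun_deriv[of p]], of "1 - 2*e"])
      using 2 e by (auto simp: JE dist_real_def)
    show ?thesis using deriv_glue[OF a b] 2 e by (simp add: JD_def)
  next
    case 3
    have "(Jeps e has_real_derivative Jd p) (at p)"
      by (rule has_field_derivative_transform_within_open[OF Jfun_deriv, of _ "{e<..<1-e}"]) (use 3 e JE in auto)
    then show ?thesis using 3 by (simp add: JD_def)
  next
    case 4
    have dQ2': "(Q2 has_real_derivative Jd p) (at p)" using dQ2[of p] 4 by simp
    have a: "(Jeps e has_real_derivative Jd p) (at p within {p..})"
      apply (rule has_field_derivative_transform_within[OF has_field_derivative_at_within[OF dQ2'], of 1])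
      using 4 e by (auto simp: JE Q2_def)
    have b: "(Jeps e has_real_derivative Jd p) (at p within {..p})"
      apply (rule has_field_derivative_transform_within[OF has_field_derivative_at_within[OF Jfun_deriv[of p]], of "1 - 2*e"])
      using 4 e by (auto simp: JE dist_real_def)
    show ?thesis using deriv_glue[OF b a] 4 e by (simp add: JD_def)
  next
    case 5
    have "(Jeps e has_real_derivative Jd (1 - e) + Jdd (1 - e) * (p - (1 - e))) (at p)"
      by (rule has_field_derivative_transform_within_open[OF dQ2, of "{1-e<..}"]) (use 5 e JE in auto)
    then show ?thesis using 5 e by (simp add: JD_def)
  qed
qed

lemma JD_mono:
  assumes e: "0 < e" "e < 1/2" and pq: "p \<le> q"
  shows "JD e p \<le> JD e q"
proof -
  have k1: "0 < Jdd e" "0 < Jdd (1 - e)" using e by (auto intro: Jdd_pos)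
  have m: "\<And>x y. e \<le> x \<Longrightarrow> x \<le> y \<Longrightarrow> y \<le> 1 - e \<Longrightarrow> Jd x \<le> Jd y"
    using e by (auto intro: Jd_mono)
  have ee: "Jd e \<le> Jd (1 - e)" using m[of e "1-e"] e by auto
  have A: "\<And>x. x \<le> e \<Longrightarrow> JD e x \<le> Jd e"
  proof -
    fix x assume x: "x \<le> e"
    have "Jdd e * (x - e) \<le> 0" using k1 x by (simp add: mult_nonneg_nonpos)
    then show "JD e x \<le> Jd e" using x e unfolding JD_def by auto
  qed
  have B: "\<And>x. e \<le> x \<Longrightarrow> Jd e \<le> JD e x"
  proof -
    fix x assume x: "e \<le> x"
    have "0 \<le> Jdd (1-e) * (x - (1-e))" if "x > 1 - e" using k1 that by simp
    then show "Jd e \<le> JD e x" using x e ee m[of e x] unfolding JD_def by auto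
  qed
  have C: "\<And>x. x \<le> 1 - e \<Longrightarrow> JD e x \<le> Jd (1 - e)"
  proof -
    fix x assume x: "x \<le> 1 - e"
    have "Jdd e * (x - e) \<le> 0" if "x < e" using k1 that by (simp add: mult_nonneg_nonpos)
    then show "JD e x \<le> Jd (1 - e)" using x e ee m[of x "1-e"] unfolding JD_def by auto
  qed
  have D: "\<And>x. 1 - e \<le> x \<Longrightarrow> Jd (1 - e) \<le> JD e x"
  proof -
    fix x assume x: "1 - e \<le> x"
    have "0 \<le> Jdd (1-e) * (x - (1-e))" using k1 x by simp
    then show "Jd (1 - e) \<le> JD e x" using x e unfolding JD_def by auto
  qed
  consider "q < e" | "p < e" "e \<le> q" | "e \<le> p" "q \<le> 1 - e" | "p \<le> 1 - e" "1 - e < q" | "1 - e < p"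
    using pq by linarith
  then show ?thesis
  proof cases
    case 1
    have "Jdd e * (p - e) \<le> Jdd e * (q - e)" using k1 pq by (simp add: mult_left_mono)
    then show ?thesis using 1 pq unfolding JD_def by auto
  next
    case 2 then show ?thesis using A[of p] B[of q] by auto
  next
    case 3 then show ?thesis using m[of p q] pq e unfolding JD_def by auto
  next
    case 4 then show ?thesis using C[of p] D[of q] by auto
  next
    case 5
    have "Jdd (1-e) * (p - (1-e)) \<le> Jdd (1-e) * (q - (1-e))" using k1 pq by (simp add: mult_left_mono)
    then show ?thesis using 5 pq e unfolding JD_def by auto
  qed
qed

lemma deriv_Jeps: "0 < e \<Longrightarrow> e < 1/2 \<Longrightarrow> deriv (Jeps e) p = JD e p"
  using Jeps_deriv DERIV_imp_deriv by blast

lemma Jeps_convex_ineq: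
  assumes e: "0 < e" "e < 1/2"
  shows "Jeps e a - Jeps e b \<le> (a - b) * deriv (Jeps e) a"
proof -
  have D: "\<And>x. (Jeps e has_real_derivative JD e x) (at x)" by (rule Jeps_deriv[OF e])
  consider "a = b" | "b < a" | "a < b" by linarith
  then show ?thesis
  proof cases
    case 1 then show ?thesis by simp
  next
    case 2
    obtain z where z: "b < z" "z < a" "Jeps e a - Jeps e b = (a - b) * JD e z"
      using MVT2[OF 2 D] by blast
    have "JD e z \<le> JD e a" using JD_mono[OF e] z by auto
    then show ?thesis using z 2 deriv_Jeps[OF e] by (simp add: mult_left_mono)
  next
    case 3
    obtain z where z: "a < z" "z < b" "Jeps e b - Jeps e a = (b - a) * JD e z"
      using MVT2[OF 3 D] by blast
    have "JD e a \<le> JD e z" using JD_mono[OF e] z by auto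
    then have "(b - a) * JD e a \<le> (b - a) * JD e z" using 3 by (simp add: mult_left_mono)
    then show ?thesis using z 3 deriv_Jeps[OF e] by (simp add: algebra_simps)
  qed
qed


lemma deriv_Fc: "deriv (Fc \<eta>) p = (1 / (4 * \<eta>^2)) * (4 * p^3 - 6 * p^2 + 3 * p)"
proof -
  define k where "k = 1 / (4 * \<eta>^2)"
  have "((\<lambda>p. k * (p^4 - 2 * p^3 + (3/2) * p^2)) has_real_derivative k * (4 * p^3 - 6 * p^2 + 3 * p)) (at p)"
    by (auto intro!: derivative_eq_intros simp: algebra_simps)
  then have "(Fc \<eta> has_real_derivative k * (4 * p^3 - 6 * p^2 + 3 * p)) (at p)"
    unfolding Fc_def[abs_def] k_def .
  then show ?thesis unfolding k_def by (rule DERIV_imp_deriv)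
qed

lemma deriv_Fe: "deriv (Fe \<eta>) p = - (1 / (4 * \<eta>^2)) * p"
proof -
  define k where "k = 1 / (8 * \<eta>^2)"
  have "((\<lambda>p. - k * p^2) has_real_derivative - k * (2 * p)) (at p)"
    by (auto intro!: derivative_eq_intros simp: algebra_simps)
  moreover have "- k * (2 * p) = - (1 / (4 * \<eta>^2)) * p" unfolding k_def by simp
  ultimately have "(Fe \<eta> has_real_derivative - (1 / (4 * \<eta>^2)) * p) (at p)"
    unfolding Fe_def[abs_def] k_def by simp
  then show ?thesis by (rule DERIV_imp_deriv)
qed

lemma poly_ineq:
  fixes a b k :: real
  assumes "0 \<le> k"
  shows "k * (a^2 * (a - 1)^2) - k * (b^2 * (b - 1)^2)
         \<le> (k * (4 * a^3 - 6 * a^2 + 3 * a) - k * b) * (a - b)"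
proof -
  have "(k * (4 * a^3 - 6 * a^2 + 3 * a) - k * b) * (a - b) - (k * (a^2 * (a - 1)^2) - k * (b^2 * (b - 1)^2))
     = k * ((b-a)^2 * (((a-1/2)+(b-1/2))^2 + 2*(a-1/2)^2) + (a-b)^2/2)"
    by (simp add: field_simps power2_eq_square power3_eq_cube power4_eq_xxxx)
  moreover have "0 \<le> k * ((b-a)^2 * (((a-1/2)+(b-1/2))^2 + 2*(a-1/2)^2) + (a-b)^2/2)"
    using assms by simp
  ultimately show ?thesis by linarith
qed

lemma F_ineq:
  "Fpot \<eta> a - Fpot \<eta> b \<le> (deriv (Fc \<eta>) a + deriv (Fe \<eta>) b) * (a - b)"
proof -
  have k: "0 \<le> 1 / (4 * \<eta>^2)" by simp
  show ?thesis using poly_ineq[OF k, of a b] unfolding deriv_Fc deriv_Fe Fpot_def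
    by (simp add: algebra_simps)
qed


lemma vtx_minus: "vtx I b - fst I = (snd I \<bullet> b) *\<^sub>R b"
  by (simp add: vtx_def)

lemma vtx_inner:
  assumes "b \<in> Basis" "b' \<in> Basis"
  shows "(vtx I b - fst I) \<bullet> b' = (if b = b' then snd I \<bullet> b else 0)"
  using assms by (simp add: vtx_minus inner_Basis)

lemma finite_verts: "finite (verts I)"
  by (simp add: verts_def)

lemma verts_sub_cell: "verts I \<subseteq> cell I"
  unfolding cell_def by (rule hull_subset)

lemma fst_in_cell: "fst I \<in> cell I"
  using verts_sub_cell[of I] by (auto simp: verts_def)

lemma vtx_in_cell: "b \<in> Basis \<Longrightarrow> vtx I b \<in> cell I"
  using verts_sub_cell[of I] by (auto simp: verts_def)

lemma convex_cell: "convex (cell I)"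
  by (simp add: cell_def)

lemma compact_cell: "compact (cell I)"
  by (simp add: cell_def compact_convex_hull finite_verts finite_imp_compact)

lemma closed_cell: "closed (cell I)"
  by (simp add: compact_cell compact_imp_closed)

definition ia :: "'a::euclidean_space elem \<Rightarrow> ('a \<Rightarrow> real) \<Rightarrow> 'a" where
  "ia I g = (\<Sum>b\<in>Basis. ((g (vtx I b) - g (fst I)) / (snd I \<bullet> b)) *\<^sub>R b)"

lemma interp_affine:
  "interp_cell I g x = ia I g \<bullet> x + (g (fst I) - ia I g \<bullet> fst I)"
proof -
  have "ia I g \<bullet> x - ia I g \<bullet> fst I = ia I g \<bullet> (x - fst I)" by (simp add: inner_diff_right)
  also have "\<dots> = (\<Sum>b\<in>Basis. ((x - fst I) \<bullet> b / (snd I \<bullet> b)) * (g (vtx I b) - g (fst I)))"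
    unfolding ia_def inner_sum_left
    by (rule sum.cong) (simp_all add: inner_commute)
  finally show ?thesis unfolding interp_cell_def by simp
qed

lemma continuous_interp: "continuous_on S (interp_cell I g)"
  unfolding interp_affine[abs_def] by (intro continuous_intros)

lemma interp_fst: "interp_cell I g (fst I) = g (fst I)"
  by (simp add: interp_cell_def)

lemma interp_vtx:
  assumes "b \<in> Basis" "snd I \<bullet> b \<noteq> 0"
  shows "interp_cell I g (vtx I b) = g (vtx I b)"
proof -
  have "(\<Sum>b'\<in>Basis. ((vtx I b - fst I) \<bullet> b' / (snd I \<bullet> b')) * (g (vtx I b') - g (fst I)))
      = (\<Sum>b'\<in>Basis. (if b = b' then g (vtx I b) - g (fst I) else 0))"
    by (rule sum.cong) (use assms in \<open>auto simp: vtx_inner\<close>)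
  also have "\<dots> = g (vtx I b) - g (fst I)" using assms by simp
  finally show ?thesis unfolding interp_cell_def by simp
qed

lemma interp_verts:
  assumes "\<forall>b\<in>Basis. snd I \<bullet> b \<noteq> 0" "v \<in> verts I"
  shows "interp_cell I g v = g v"
  using assms by (auto simp: verts_def interp_fst interp_vtx)

lemma affine_nonneg_hull:
  fixes f :: "'a::euclidean_space \<Rightarrow> real"
  assumes "\<And>x. f x = c \<bullet> x + d" "\<And>v. v \<in> S \<Longrightarrow> 0 \<le> f v" "x \<in> convex hull S"
  shows "0 \<le> f x"
proof -
  have "{x. - d \<le> c \<bullet> x} = {x. 0 \<le> f x}" using assms(1) by auto
  then have cv: "convex {x. 0 \<le> f x}" using convex_halfspace_ge[of "-d" c] by simp
  have "S \<subseteq> {x. 0 \<le> f x}" using assms(2) by auto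
  then have "convex hull S \<subseteq> {x. 0 \<le> f x}" using cv by (rule hull_minimal)
  then show ?thesis using assms(3) by auto
qed

lemma affine_eq_hull:
  fixes f g :: "'a::euclidean_space \<Rightarrow> real"
  assumes "\<And>x. f x = c \<bullet> x + d" "\<And>x. g x = c' \<bullet> x + d'" "\<And>v. v \<in> S \<Longrightarrow> f v = g v" "x \<in> convex hull S"
  shows "f x = g x"
proof -
  have "0 \<le> f x - g x"
    by (rule affine_nonneg_hull[of _ "c - c'" "d - d'" S]) (use assms in \<open>auto simp: inner_diff_left\<close>)
  moreover have "0 \<le> g x - f x"
    by (rule affine_nonneg_hull[of _ "c' - c" "d' - d" S]) (use assms in \<open>auto simp: inner_diff_left\<close>)
  ultimately show ?thesis by simp
qed

lemma nondeg: "struct_triang T \<Longrightarrow> I \<in> T \<Longrightarrow> b \<in> Basis \<Longrightarrow> snd I \<bullet> b \<noteq> 0"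
  unfolding struct_triang_def by blast

lemma Ih_cell:
  assumes ST: "struct_triang T" and I: "I \<in> T" and x: "x \<in> cell I"
  shows "Ih T g x = interp_cell I g x"
proof -
  have ex: "\<exists>I\<in>T. x \<in> cell I" using I x by blast
  define I0 where "I0 = (SOME I. I \<in> T \<and> x \<in> cell I)"
  have I0: "I0 \<in> T" "x \<in> cell I0" using someI_ex[of "\<lambda>I. I \<in> T \<and> x \<in> cell I"] ex
    unfolding I0_def by auto
  have "interp_cell I0 g x = interp_cell I g x"
  proof (cases "I0 = I")
    case True then show ?thesis by simp
  next
    case False
    have "x \<in> convex hull (verts I0 \<inter> verts I)"
      using ST I0 I x False unfolding struct_triang_def by blast
    note A = affine_eq_hull[where f="interp_cell I0 g" and g="interp_cell I g",
            OF interp_affine interp_affine]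
    have nd0: "\<forall>b\<in>Basis. snd I0 \<bullet> b \<noteq> 0" using nondeg[OF ST I0(1)] by blast
    have nd: "\<forall>b\<in>Basis. snd I \<bullet> b \<noteq> 0" using nondeg[OF ST I] by blast
    show ?thesis
      by (rule A[OF _ \<open>x \<in> convex hull (verts I0 \<inter> verts I)\<close>])
         (simp add: interp_verts[OF nd0] interp_verts[OF nd])
  qed
  then show ?thesis unfolding Ih_def I0_def using ex by simp
qed

lemma sum_lin: "(\<Sum>b\<in>B. (t b::real) * ((a b - c b) - (a0 - c0))) = (\<Sum>b\<in>B. t b * (a b - a0)) - (\<Sum>b\<in>B. t b * (c b - c0))"
  by (simp add: right_diff_distrib sum_subtractf)

lemma interp_diff: "interp_cell I (\<lambda>x. g1 x - g2 x) x = interp_cell I g1 x - interp_cell I g2 x"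
proof -
  have "(\<Sum>b\<in>Basis. ((x - fst I) \<bullet> b / (snd I \<bullet> b)) * ((g1 (vtx I b) - g2 (vtx I b)) - (g1 (fst I) - g2 (fst I))))
    = (\<Sum>b\<in>Basis. ((x - fst I) \<bullet> b / (snd I \<bullet> b)) * (g1 (vtx I b) - g1 (fst I)))
      - (\<Sum>b\<in>Basis. ((x - fst I) \<bullet> b / (snd I \<bullet> b)) * (g2 (vtx I b) - g2 (fst I)))"
    by (rule sum_lin)
  then show ?thesis unfolding interp_cell_def by simp
qed

lemma Ih_diff: "Ih T (\<lambda>x. g1 x - g2 x) x = Ih T g1 x - Ih T g2 x"
  unfolding Ih_def by (simp add: interp_diff)

lemma interp_mono:
  assumes nd: "\<forall>b\<in>Basis. snd I \<bullet> b \<noteq> 0" and x: "x \<in> cell I"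
    and le: "\<And>v. v \<in> verts I \<Longrightarrow> g v \<le> g' v"
  shows "interp_cell I g x \<le> interp_cell I g' x"
proof -
  define d where "d = (\<lambda>x. g' x - g x)"
  define lam where "lam = (\<lambda>b y. (y - fst I) \<bullet> b / (snd I \<bullet> b))"
  have lam_aff: "\<And>b y. lam b y = ((1 / (snd I \<bullet> b)) *\<^sub>R b) \<bullet> y + (- (fst I \<bullet> b) / (snd I \<bullet> b))"
    unfolding lam_def by (simp add: inner_diff_left inner_diff_right inner_commute diff_divide_distrib)
  have lamv: "\<And>b v. b \<in> Basis \<Longrightarrow> v \<in> verts I \<Longrightarrow> 0 \<le> lam b v"
    unfolding lam_def verts_def using nd by (auto simp: vtx_inner)
  have lam0: "\<And>b. b \<in> Basis \<Longrightarrow> 0 \<le> lam b x"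
    using affine_nonneg_hull[OF lam_aff lamv] x unfolding cell_def by blast
  have sum_aff: "\<And>y. 1 - (\<Sum>b\<in>Basis. lam b y)
     = (- (\<Sum>b\<in>Basis. (1 / (snd I \<bullet> b)) *\<^sub>R b)) \<bullet> y + (1 + (\<Sum>b\<in>Basis. (fst I \<bullet> b) / (snd I \<bullet> b)))"
    by (simp add: lam_aff sum.distrib inner_sum_left sum_negf sum_subtractf algebra_simps)
  have sumv: "\<And>v. v \<in> verts I \<Longrightarrow> 0 \<le> 1 - (\<Sum>b\<in>Basis. lam b v)"
  proof -
    fix v assume v: "v \<in> verts I"
    show "0 \<le> 1 - (\<Sum>b\<in>Basis. lam b v)"
    proof (cases "v = fst I")
      case True then show ?thesis by (simp add: lam_def)
    next
      case False
      then obtain b0 where b0: "b0 \<in> Basis" "v = vtx I b0" using v unfolding verts_def by auto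
      have "(\<Sum>b\<in>Basis. lam b v) = (\<Sum>b\<in>Basis. if b0 = b then 1 else 0)"
        by (rule sum.cong) (use nd b0 in \<open>auto simp: lam_def vtx_inner\<close>)
      also have "\<dots> = 1" using b0 by simp
      finally show ?thesis by simp
    qed
  qed
  have sum0: "0 \<le> 1 - (\<Sum>b\<in>Basis. lam b x)"
    using affine_nonneg_hull[where f="\<lambda>y. 1 - (\<Sum>b\<in>Basis. lam b y)", OF sum_aff sumv] x
    unfolding cell_def by blast
  have dv: "\<And>v. v \<in> verts I \<Longrightarrow> 0 \<le> d v" using le unfolding d_def by auto
  have "interp_cell I d x = (1 - (\<Sum>b\<in>Basis. lam b x)) * d (fst I) + (\<Sum>b\<in>Basis. lam b x * d (vtx I b))"
  proof -
    have "(\<Sum>b\<in>Basis. lam b x * (d (vtx I b) - d (fst I))) = (\<Sum>b\<in>Basis. lam b x * d (vtx I b)) - (\<Sum>b\<in>Basis. lam b x) * d (fst I)"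
      by (simp add: right_diff_distrib sum_subtractf sum_distrib_right)
    moreover have "interp_cell I d x = d (fst I) + (\<Sum>b\<in>Basis. lam b x * (d (vtx I b) - d (fst I)))"
      unfolding interp_cell_def lam_def by simp
    ultimately show ?thesis by (simp add: algebra_simps)
  qed
  also have "0 \<le> \<dots>"
    using sum0 lam0 dv by (auto intro!: add_nonneg_nonneg mult_nonneg_nonneg sum_nonneg simp: verts_def)
  finally have "0 \<le> interp_cell I d x" .
  then show ?thesis unfolding d_def interp_diff by simp
qed


subsection \<open>Negligible sets\<close>

lemma negligible_hull_small:
  fixes S :: "'a::euclidean_space set"
  assumes "finite S" "card S \<le> DIM('a)"
  shows "negligible (convex hull S)"
proof -
  have i: "interior (convex hull S) = {}" by (rule empty_interior_convex_hull[OF assms])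
  have "closed (convex hull S)"
    by (simp add: assms(1) compact_convex_hull compact_imp_closed finite_imp_compact)
  then have "frontier (convex hull S) = convex hull S" by (simp add: frontier_def i)
  then show ?thesis using negligible_convex_frontier[of "convex hull S"] by simp
qed

lemma card_verts:
  fixes I :: "'a::euclidean_space elem"
  assumes nd: "\<forall>b\<in>Basis. snd I \<bullet> b \<noteq> 0"
  shows "card (verts I) = Suc DIM('a)"
proof -
  have inj: "inj_on (vtx I) Basis"
  proof (rule inj_onI)
    fix b b' assume b: "b \<in> Basis" "b' \<in> Basis" "vtx I b = vtx I b'"
    have e1: "(vtx I b - fst I) \<bullet> b = snd I \<bullet> b" using vtx_inner[of b b I] b by simp
    have e2: "(vtx I b' - fst I) \<bullet> b = (if b' = b then snd I \<bullet> b' else 0)" using vtx_inner[of b' b I] b by simp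
    show "b = b'" by (metis e1 e2 b(3) nd b(1))
  qed
  have nin: "fst I \<notin> vtx I ` Basis"
  proof
    assume "fst I \<in> vtx I ` Basis"
    then obtain b where b: "b \<in> Basis" "fst I = vtx I b" by auto
    have e1: "(vtx I b - fst I) \<bullet> b = snd I \<bullet> b" using vtx_inner[of b b I] b by simp
    show False by (metis e1 b nd diff_self inner_zero_left)
  qed
  show ?thesis unfolding verts_def using nin card_image[OF inj] by simp
qed

lemma negligible_cell_inter:
  fixes T :: "'a::euclidean_space elem set"
  assumes ST: "struct_triang T" and I: "I \<in> T" "I' \<in> T" "I \<noteq> I'"
  shows "negligible (cell I \<inter> cell I')"
proof -
  have eq: "cell I \<inter> cell I' = convex hull (verts I \<inter> verts I')"
    using ST I unfolding struct_triang_def by blast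
  have c1: "card (verts I) = Suc DIM('a)" "card (verts I') = Suc DIM('a)"
    using card_verts nondeg[OF ST] I by blast+
  have fin: "finite (verts I \<inter> verts I')" by (simp add: finite_verts)
  have "card (verts I \<inter> verts I') \<le> DIM('a)"
  proof (rule ccontr)
    assume "\<not> card (verts I \<inter> verts I') \<le> DIM('a)"
    then have ge: "Suc DIM('a) \<le> card (verts I \<inter> verts I')" by simp
    have "verts I \<inter> verts I' = verts I"
      using card_subset_eq[OF finite_verts, of "verts I \<inter> verts I'"] ge c1
        card_mono[OF finite_verts, of "verts I \<inter> verts I'" I] by auto
    moreover have "verts I \<inter> verts I' = verts I'"
      using card_subset_eq[OF finite_verts, of "verts I \<inter> verts I'"] ge c1
        card_mono[OF finite_verts, of "verts I \<inter> verts I'" I'] by auto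
    ultimately have "cell I = cell I'" unfolding cell_def by simp
    then show False using ST I unfolding struct_triang_def inj_on_def by blast
  qed
  then show ?thesis unfolding eq by (rule negligible_hull_small[OF fin])
qed

definition bad :: "'a::euclidean_space elem set \<Rightarrow> 'a set" where
  "bad T = (\<Union>I\<in>T. frontier (cell I))"

lemma negligible_bad: "struct_triang T \<Longrightarrow> negligible (bad T)"
  unfolding bad_def struct_triang_def
  by (intro negligible_Union) (auto intro: negligible_convex_frontier convex_cell)

lemma good_point:
  assumes "x \<in> interior (\<Union>(cell ` T))" "x \<notin> bad T"
  obtains I where "I \<in> T" "x \<in> interior (cell I)"
proof -
  obtain I where I: "I \<in> T" "x \<in> cell I" using assms(1) interior_subset by blast
  then have "x \<in> interior (cell I)" using assms(2) closed_cell[of I]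
    unfolding bad_def frontier_def by (auto simp: closure_closed)
  then show ?thesis using I that by blast
qed

lemma union_minus_interior:
  "(\<Union>(cell ` T)) - interior (\<Union>(cell ` T)) \<subseteq> bad T"
proof
  fix x assume x: "x \<in> (\<Union>(cell ` T)) - interior (\<Union>(cell ` T))"
  then obtain I where I: "I \<in> T" "x \<in> cell I" by auto
  have "interior (cell I) \<subseteq> interior (\<Union>(cell ` T))" using I by (intro interior_mono) auto
  then have "x \<notin> interior (cell I)" using x by auto
  then have "x \<in> frontier (cell I)" unfolding frontier_def using I closed_cell[of I]
    by (simp add: closure_closed)
  then show "x \<in> bad T" using I unfolding bad_def by blast
qed

subsection \<open>Integration\<close>

lemma integrable_compact_cont:
  fixes f :: "'a::euclidean_space \<Rightarrow> real"
  assumes "compact S" "continuous_on S f"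
  shows "f integrable_on S"
  using set_borel_integral_eq_integral(1) borel_integrable_compact[OF assms]
  unfolding set_integrable_def by blast

lemma has_integral_Omega:
  fixes F :: "'a::euclidean_space \<Rightarrow> real"
  assumes ST: "struct_triang T" and int: "\<And>I. I \<in> T \<Longrightarrow> F integrable_on cell I"
  shows "(F has_integral (\<Sum>I\<in>T. integral (cell I) F)) (interior (\<Union>(cell ` T)))"
proof -
  have fin: "finite T" and inj: "inj_on cell T" using ST unfolding struct_triang_def by auto
  have "(F has_integral (\<Sum>S\<in>cell ` T. integral S F)) (\<Union>(cell ` T))"
  proof (rule has_integral_Union)
    show "finite (cell ` T)" using fin by simp
    show "\<And>S. S \<in> cell ` T \<Longrightarrow> (F has_integral integral S F) S" using int by auto
    show "pairwise (\<lambda>S S'. negligible (S \<inter> S')) (cell ` T)"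
      unfolding pairwise_def using negligible_cell_inter[OF ST] by blast
  qed
  moreover have "(\<Sum>S\<in>cell ` T. integral S F) = (\<Sum>I\<in>T. integral (cell I) F)"
    using sum.reindex[OF inj] by simp
  ultimately have U: "(F has_integral (\<Sum>I\<in>T. integral (cell I) F)) (\<Union>(cell ` T))" by simp
  show ?thesis
  proof (subst has_integral_spike_set_eq)
    show "negligible {x \<in> interior (\<Union>(cell ` T)) - \<Union>(cell ` T). F x \<noteq> 0}"
    proof -
      have "{x \<in> interior (\<Union>(cell ` T)) - \<Union>(cell ` T). F x \<noteq> 0} = {}"
        using interior_subset[of "\<Union>(cell ` T)"] by blast
      then show ?thesis by (metis negligible_empty)
    qed
    show "negligible {x \<in> \<Union>(cell ` T) - interior (\<Union>(cell ` T)). F x \<noteq> 0}"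
      by (rule negligible_subset[OF negligible_bad[OF ST]]) (use union_minus_interior in blast)
  qed (rule U)
qed

lemma integrable_Omega:
  fixes F :: "'a::euclidean_space \<Rightarrow> real"
  assumes "struct_triang T" "\<And>I. I \<in> T \<Longrightarrow> F integrable_on cell I"
  shows "F integrable_on (interior (\<Union>(cell ` T)))"
  using has_integral_Omega[OF assms] by blast

lemma integral_Omega:
  fixes F :: "'a::euclidean_space \<Rightarrow> real"
  assumes "struct_triang T" "\<And>I. I \<in> T \<Longrightarrow> F integrable_on cell I"
  shows "integral (interior (\<Union>(cell ` T))) F = (\<Sum>I\<in>T. integral (cell I) F)"
  using has_integral_Omega[OF assms] by (rule integral_unique)

lemma integrable_cell_ae:
  fixes F :: "'a::euclidean_space \<Rightarrow> real"
  assumes "\<And>x. x \<in> interior (cell I) \<Longrightarrow> F x = G x" "continuous_on (cell I) G"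
  shows "F integrable_on cell I"
proof (rule integrable_spike[OF integrable_compact_cont[OF compact_cell assms(2)]
        negligible_convex_frontier[OF convex_cell[of I]]])
  fix x assume "x \<in> cell I - frontier (cell I)"
  then have "x \<in> interior (cell I)" using closed_cell[of I] by (auto simp: frontier_def closure_closed)
  then show "F x = G x" using assms(1) by simp
qed

lemma integral_le_ae:
  fixes F G :: "'a::euclidean_space \<Rightarrow> real"
  assumes N: "negligible N" and FG: "F integrable_on S" "G integrable_on S"
    and le: "\<And>x. x \<in> S - N \<Longrightarrow> F x \<le> G x"
  shows "integral S F \<le> integral S G"
proof -
  define H where "H = (\<lambda>x. if x \<in> N then 0 else G x - F x)"
  have D: "(\<lambda>x. G x - F x) integrable_on S" by (rule integrable_diff[OF FG(2) FG(1)])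
  have eq: "integral S (\<lambda>x. G x - F x) = integral S H"
    by (rule integral_spike[OF N]) (auto simp: H_def)
  have HI: "H integrable_on S"
    by (rule integrable_spike[OF D N]) (auto simp: H_def)
  have "0 \<le> integral S H" by (rule integral_nonneg[OF HI]) (use le in \<open>auto simp: H_def\<close>)
  then have "0 \<le> integral S (\<lambda>x. G x - F x)" using eq by simp
  then show ?thesis using integral_diff[OF FG(2) FG(1)] by simp
qed

subsection \<open>Gradients\<close>

lemma grad_unique:
  assumes "GDERIV f x :> D"
  shows "grad f x = D"
  unfolding grad_def
proof (rule some_equality)
  show "GDERIV f x :> D" by (rule assms)
next
  fix D' assume "GDERIV f x :> D'"
  then have "(\<lambda>h. h \<bullet> D') = (\<lambda>h. h \<bullet> D)"
    using assms unfolding gderiv_def by (rule has_derivative_unique)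
  then have "(D' - D) \<bullet> D' = (D' - D) \<bullet> D" by meson
  then have "(D' - D) \<bullet> (D' - D) = 0" by (simp add: inner_diff_right)
  then show "D' = D" by simp
qed

lemma P1_grad:
  fixes T :: "'a::euclidean_space elem set"
  assumes ST: "struct_triang T" and f: "P1 T f" and I: "I \<in> T" and x: "x \<in> interior (cell I)"
  shows "GDERIV f x :> grad f x"
    and "\<And>b. b \<in> Basis \<Longrightarrow> grad f x \<bullet> b = (f (vtx I b) - f (fst I)) / (snd I \<bullet> b)"
proof -
  obtain a c where ac: "\<And>y. y \<in> cell I \<Longrightarrow> f y = a \<bullet> y + c"
    using f I unfolding P1_def by blast
  have "((\<lambda>y. y \<bullet> a + c) has_derivative (\<lambda>h. h \<bullet> a)) (at x)"
    by (intro derivative_eq_intros bounded_linear_imp_has_derivative bounded_linear_inner_left) auto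
  then have "(f has_derivative (\<lambda>h. h \<bullet> a)) (at x)"
  proof (rule has_derivative_transform_within_open[OF _ open_interior x])
    fix y assume "y \<in> interior (cell I)"
    then have "y \<in> cell I" using interior_subset by blast
    then show "y \<bullet> a + c = f y" using ac by (simp add: inner_commute)
  qed
  then have G: "GDERIV f x :> a" unfolding gderiv_def .
  then have ga: "grad f x = a" by (rule grad_unique)
  show "GDERIV f x :> grad f x" using G ga by simp
  fix b :: 'a assume b: "b \<in> Basis"
  have nd: "snd I \<bullet> b \<noteq> 0" using nondeg[OF ST I b] .
  have "f (vtx I b) - f (fst I) = a \<bullet> (vtx I b - fst I)"
    using ac[OF vtx_in_cell[OF b]] ac[OF fst_in_cell] by (simp add: inner_diff_right)
  also have "\<dots> = (snd I \<bullet> b) * (a \<bullet> b)" by (simp add: vtx_minus)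
  finally show "grad f x \<bullet> b = (f (vtx I b) - f (fst I)) / (snd I \<bullet> b)" using nd ga by simp
qed

lemma P1_diff: "P1 T f \<Longrightarrow> P1 T g \<Longrightarrow> P1 T (\<lambda>x. f x - g x)"
proof -
  assume f: "P1 T f" and g: "P1 T g"
  have c: "continuous_on (\<Union>(cell ` T)) (\<lambda>x. f x - g x)"
    using f g unfolding P1_def by (intro continuous_intros) auto
  have "\<forall>I\<in>T. \<exists>a c. \<forall>x\<in>cell I. f x - g x = a \<bullet> x + c"
  proof
    fix I assume I: "I \<in> T"
    obtain a1 c1 where 1: "\<forall>x\<in>cell I. f x = a1 \<bullet> x + c1" using f I unfolding P1_def by blast
    obtain a2 c2 where 2: "\<forall>x\<in>cell I. g x = a2 \<bullet> x + c2" using g I unfolding P1_def by blast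
    show "\<exists>a c. \<forall>x\<in>cell I. f x - g x = a \<bullet> x + c"
      by (rule exI[of _ "a1 - a2"], rule exI[of _ "c1 - c2"]) (use 1 2 in \<open>auto simp: inner_diff_left\<close>)
  qed
  then show ?thesis using c unfolding P1_def by blast
qed

lemma P1_Ih:
  assumes ST: "struct_triang T"
  shows "P1 T (Ih T g)"
proof -
  have fin: "finite T" using ST unfolding struct_triang_def by auto
  have "continuous_on (\<Union>(cell ` T)) (Ih T g)"
  proof (rule continuous_on_closed_Union[OF fin closed_cell])
    fix I assume I: "I \<in> T"
    show "continuous_on (cell I) (Ih T g)"
      using continuous_interp[of "cell I" I g] continuous_on_cong[OF refl, of "cell I" "Ih T g" "interp_cell I g"]
        Ih_cell[OF ST I] by auto
  qed
  moreover have "\<forall>I\<in>T. \<exists>a c. \<forall>x\<in>cell I. Ih T g x = a \<bullet> x + c"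
    using Ih_cell[OF ST] interp_affine by metis
  ultimately show ?thesis unfolding P1_def by blast
qed


lemma mj_scalar:
  fixes p dj h s c :: real
  assumes "p = 0 \<Longrightarrow> dj = 0"
  shows "- ((if p \<noteq> 0 then (p / dj)^2 else c^2) * s * (dj / h))
         \<le> (if p \<noteq> 0 then (p / dj)^2 else c^2) * s * s + (p / h)^2"
proof (cases "p = 0")
  case True
  have "0 \<le> c^2 * (s * s)" by simp
  then show ?thesis using assms True by (simp add: mult.assoc)
next
  case False
  show ?thesis
  proof (cases "dj = 0")
    case True then show ?thesis using False by simp
  next
    case dj: False
    define r where "r = p / dj"
    define t where "t = dj / h"
    have pt: "p / h = r * t" unfolding r_def t_def using dj by simp
    have "0 \<le> r^2 * ((s + t/2)^2 + 3 * t^2 / 4)" by simp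
    then have "- (r^2 * s * t) \<le> r^2 * s * s + (r * t)^2"
      by (simp add: power2_eq_square algebra_simps)
    then show ?thesis using False pt unfolding r_def[symmetric] t_def[symmetric] by simp
  qed
qed

lemma norm_sq_sum: "(norm (v::'a::euclidean_space))^2 = (\<Sum>b\<in>Basis. (v \<bullet> b) * (v \<bullet> b))"
  by (simp add: power2_norm_eq_inner euclidean_inner[of v v])

lemma Ih_vert:
  assumes ST: "struct_triang T" and I: "I \<in> T" and v: "v \<in> verts I"
  shows "Ih T g v = g v"
  using Ih_cell[OF ST I] verts_sub_cell[of I] v interp_verts[of I v g] nondeg[OF ST I] by auto

lemma integrable_Ih_cell:
  assumes ST: "struct_triang T" and I: "I \<in> T"
  shows "Ih T g integrable_on cell I"
  by (rule integrable_cell_ae[OF _ continuous_interp[of "cell I" I g]])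
     (use Ih_cell[OF ST I] interior_subset in blast)

lemma integrable_Ih:
  assumes ST: "struct_triang T"
  shows "Ih T g integrable_on interior (\<Union>(cell ` T))"
  by (rule integrable_Omega[OF ST integrable_Ih_cell[OF ST]])

lemma mob_bound:
  fixes T :: "'a::euclidean_space elem set"
  assumes ST: "struct_triang T" and phi: "P1 T \<phi>" and mu: "P1 T \<mu>"
    and nu: "\<nu> = Ih T (\<lambda>x. deriv (Jeps \<epsilon>) (\<phi> x))"
  shows "- mob_form \<epsilon> T \<phi> \<mu> \<nu> \<le> mob_form \<epsilon> T \<phi> \<mu> \<mu>
            + integral (interior (\<Union>(cell ` T))) (\<lambda>x. (norm (grad \<phi> x))^2)"
proof -
  have nuP: "P1 T \<nu>" unfolding nu by (rule P1_Ih[OF ST])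
  define F1 where "F1 = (\<lambda>I x. \<Sum>b\<in>Basis. MJ \<epsilon> \<phi> I b * (grad \<mu> x \<bullet> b) * (grad \<nu> x \<bullet> b))"
  define F2 where "F2 = (\<lambda>I x. \<Sum>b\<in>Basis. MJ \<epsilon> \<phi> I b * (grad \<mu> x \<bullet> b) * (grad \<mu> x \<bullet> b))"
  define F3 where "F3 = (\<lambda>x. (norm (grad \<phi> x))^2)"
  have cell_est: "- integral (cell I) (F1 I) \<le> integral (cell I) (F2 I) + integral (cell I) F3
     \<and> F3 integrable_on cell I" if I: "I \<in> T" for I
  proof -
    define s where "s = (\<lambda>f b. (f (vtx I b) - f (fst I)) / (snd I \<bullet> b))"
    have gr: "\<And>f x b. P1 T f \<Longrightarrow> x \<in> interior (cell I) \<Longrightarrow> b \<in> Basis \<Longrightarrow> grad f x \<bullet> b = s f b"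
      unfolding s_def using P1_grad(2)[OF ST _ I] by blast
    define K1 where "K1 = (\<Sum>b\<in>Basis. MJ \<epsilon> \<phi> I b * s \<mu> b * s \<nu> b)"
    define K2 where "K2 = (\<Sum>b\<in>Basis. MJ \<epsilon> \<phi> I b * s \<mu> b * s \<mu> b)"
    define K3 where "K3 = (\<Sum>b\<in>Basis. s \<phi> b * s \<phi> b)"
    have e1: "\<And>x. x \<in> interior (cell I) \<Longrightarrow> F1 I x = K1"
      unfolding F1_def K1_def using gr[OF mu] gr[OF nuP] by (auto intro!: sum.cong)
    have e2: "\<And>x. x \<in> interior (cell I) \<Longrightarrow> F2 I x = K2"
      unfolding F2_def K2_def using gr[OF mu] by (auto intro!: sum.cong)
    have e3: "\<And>x. x \<in> interior (cell I) \<Longrightarrow> F3 x = K3"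
      unfolding F3_def K3_def norm_sq_sum using gr[OF phi] by (auto intro!: sum.cong)
    have i1: "F1 I integrable_on cell I" by (rule integrable_cell_ae[OF e1 continuous_on_const])
    have i2: "F2 I integrable_on cell I" by (rule integrable_cell_ae[OF e2 continuous_on_const])
    have i3: "F3 integrable_on cell I" by (rule integrable_cell_ae[OF e3 continuous_on_const])
    have nuv: "\<And>b. b \<in> Basis \<Longrightarrow> s \<nu> b = (deriv (Jeps \<epsilon>) (\<phi> (vtx I b)) - deriv (Jeps \<epsilon>) (\<phi> (fst I))) / (snd I \<bullet> b)"
      unfolding s_def nu using Ih_vert[OF ST I] by (simp add: verts_def)
    have K: "- K1 \<le> K2 + K3"
    proof -
      have "\<And>b. b \<in> Basis \<Longrightarrow> - (MJ \<epsilon> \<phi> I b * s \<mu> b * s \<nu> b) \<le> MJ \<epsilon> \<phi> I b * s \<mu> b * s \<mu> b + s \<phi> b * s \<phi> b"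
      proof -
        fix b :: 'a assume b: "b \<in> Basis"
        define p where "p = \<phi> (vtx I b) - \<phi> (fst I)"
        define dj where "dj = deriv (Jeps \<epsilon>) (\<phi> (vtx I b)) - deriv (Jeps \<epsilon>) (\<phi> (fst I))"
        define h where "h = snd I \<bullet> b"
        define c where "c = 1 / deriv (deriv (Jeps \<epsilon>)) (\<phi> (fst I))"
        have pd: "p = 0 \<Longrightarrow> dj = 0" unfolding p_def dj_def by simp
        have M: "MJ \<epsilon> \<phi> I b = (if p \<noteq> 0 then (p / dj)^2 else c^2)"
          unfolding MJ_def p_def dj_def c_def by simp
        have sn: "s \<nu> b = dj / h" unfolding nuv[OF b] dj_def h_def ..
        have sp: "s \<phi> b * s \<phi> b = (p / h)^2" unfolding s_def p_def h_def by (simp add: power2_eq_square)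
        show "- (MJ \<epsilon> \<phi> I b * s \<mu> b * s \<nu> b) \<le> MJ \<epsilon> \<phi> I b * s \<mu> b * s \<mu> b + s \<phi> b * s \<phi> b"
          unfolding M sn sp by (rule mj_scalar[OF pd])
      qed
      then have "(\<Sum>b\<in>Basis. - (MJ \<epsilon> \<phi> I b * s \<mu> b * s \<nu> b)) \<le> (\<Sum>b\<in>Basis. MJ \<epsilon> \<phi> I b * s \<mu> b * s \<mu> b + s \<phi> b * s \<phi> b)"
        by (rule sum_mono)
      then show ?thesis unfolding K1_def K2_def K3_def by (simp add: sum.distrib sum_negf)
    qed
    have "integral (cell I) (\<lambda>x. - F1 I x) \<le> integral (cell I) (\<lambda>x. F2 I x + F3 x)"
    proof (rule integral_le_ae[OF negligible_convex_frontier[OF convex_cell[of I]]])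
      show "(\<lambda>x. - F1 I x) integrable_on cell I" using i1 by (rule integrable_neg)
      show "(\<lambda>x. F2 I x + F3 x) integrable_on cell I" using i2 i3 by (rule integrable_add)
      fix x assume "x \<in> cell I - frontier (cell I)"
      then have "x \<in> interior (cell I)" using closed_cell[of I] by (auto simp: frontier_def closure_closed)
      then show "- F1 I x \<le> F2 I x + F3 x" using e1 e2 e3 K by simp
    qed
    then show ?thesis using i1 i2 i3 by (simp add: integral_neg integral_add)
  qed
  have "- mob_form \<epsilon> T \<phi> \<mu> \<nu> = (\<Sum>I\<in>T. - integral (cell I) (F1 I))"
    unfolding mob_form_def F1_def by (simp add: sum_negf)
  also have "\<dots> \<le> (\<Sum>I\<in>T. integral (cell I) (F2 I) + integral (cell I) F3)"
    by (rule sum_mono) (use cell_est in blast)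
  also have "\<dots> = mob_form \<epsilon> T \<phi> \<mu> \<mu> + (\<Sum>I\<in>T. integral (cell I) F3)"
    unfolding mob_form_def F2_def by (simp add: sum.distrib)
  also have "(\<Sum>I\<in>T. integral (cell I) F3) = integral (interior (\<Union>(cell ` T))) F3"
    by (rule integral_Omega[OF ST, symmetric]) (use cell_est in blast)
  finally show ?thesis unfolding F3_def .
qed


lemma Ih_mono:
  assumes ST: "struct_triang T" and le: "\<And>I v. I \<in> T \<Longrightarrow> v \<in> verts I \<Longrightarrow> g1 v \<le> g2 v"
  shows "Ih T g1 y \<le> Ih T g2 y"
proof (cases "\<exists>I\<in>T. y \<in> cell I")
  case True
  then obtain I where I: "I \<in> T" "y \<in> cell I" by blast
  have "interp_cell I g1 y \<le> interp_cell I g2 y"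
    by (rule interp_mono) (use nondeg[OF ST I(1)] I le in auto)
  then show ?thesis using Ih_cell[OF ST I] by simp
next
  case False
  then show ?thesis unfolding Ih_def by simp
qed

lemma part1:
  fixes T :: "'a::euclidean_space elem set"
  assumes ST: "struct_triang T" and Om: "\<Omega> = interior (\<Union>(cell ` T))"
    and e: "0 < \<epsilon>" "\<epsilon> < 1/2" and dt: "dt > 0"
    and old: "P1 T \<phi>o" and step: "Jscheme_step \<eta> \<epsilon> T \<Omega> dt \<phi>o \<phi>n \<mu>n"
  shows "(integral \<Omega> (Ih T (\<lambda>x. Jeps \<epsilon> (\<phi>n x))) - integral \<Omega> (Ih T (\<lambda>x. Jeps \<epsilon> (\<phi>o x)))) / dt
         \<le> mob_form \<epsilon> T \<phi>n \<mu>n \<mu>n + integral \<Omega> (\<lambda>x. (norm (grad \<phi>n x))^2)"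
proof -
  have Pn: "P1 T \<phi>n" and Pmu: "P1 T \<mu>n"
    and eq1: "\<And>\<mu>b. P1 T \<mu>b \<Longrightarrow> (1 / dt) * lumped T \<Omega> (\<lambda>x. \<phi>n x - \<phi>o x) \<mu>b + mob_form \<epsilon> T \<phi>n \<mu>n \<mu>b = 0"
    using step unfolding Jscheme_step_def by auto
  define \<nu> where "\<nu> = Ih T (\<lambda>x. deriv (Jeps \<epsilon>) (\<phi>n x))"
  have Pnu: "P1 T \<nu>" unfolding \<nu>_def by (rule P1_Ih[OF ST])
  define L where "L = integral \<Omega> (Ih T (\<lambda>x. (\<phi>n x - \<phi>o x) * \<nu> x))"
  have "(1 / dt) * L + mob_form \<epsilon> T \<phi>n \<mu>n \<nu> = 0"
    using eq1[OF Pnu] unfolding L_def lumped_def .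
  then have L: "L = - dt * mob_form \<epsilon> T \<phi>n \<mu>n \<nu>" using dt by (simp add: field_simps)
  have pw: "Ih T (\<lambda>x. Jeps \<epsilon> (\<phi>n x)) y - Ih T (\<lambda>x. Jeps \<epsilon> (\<phi>o x)) y
      \<le> Ih T (\<lambda>x. (\<phi>n x - \<phi>o x) * \<nu> x) y" for y
  proof -
    have "Ih T (\<lambda>x. Jeps \<epsilon> (\<phi>n x) - Jeps \<epsilon> (\<phi>o x)) y \<le> Ih T (\<lambda>x. (\<phi>n x - \<phi>o x) * \<nu> x) y"
    proof (rule Ih_mono[OF ST])
      fix I v assume I: "I \<in> T" and v: "v \<in> verts I"
      have "\<nu> v = deriv (Jeps \<epsilon>) (\<phi>n v)" unfolding \<nu>_def by (rule Ih_vert[OF ST I v])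
      then show "Jeps \<epsilon> (\<phi>n v) - Jeps \<epsilon> (\<phi>o v) \<le> (\<phi>n v - \<phi>o v) * \<nu> v"
        using Jeps_convex_ineq[OF e] by simp
    qed
    then show ?thesis by (simp add: Ih_diff)
  qed
  have iA: "Ih T (\<lambda>x. Jeps \<epsilon> (\<phi>n x)) integrable_on \<Omega>" unfolding Om by (rule integrable_Ih[OF ST])
  have iB: "Ih T (\<lambda>x. Jeps \<epsilon> (\<phi>o x)) integrable_on \<Omega>" unfolding Om by (rule integrable_Ih[OF ST])
  have iL: "Ih T (\<lambda>x. (\<phi>n x - \<phi>o x) * \<nu> x) integrable_on \<Omega>" unfolding Om by (rule integrable_Ih[OF ST])
  have "integral \<Omega> (Ih T (\<lambda>x. Jeps \<epsilon> (\<phi>n x))) - integral \<Omega> (Ih T (\<lambda>x. Jeps \<epsilon> (\<phi>o x)))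
      = integral \<Omega> (\<lambda>y. Ih T (\<lambda>x. Jeps \<epsilon> (\<phi>n x)) y - Ih T (\<lambda>x. Jeps \<epsilon> (\<phi>o x)) y)"
    using integral_diff[OF iA iB] by simp
  also have "\<dots> \<le> L" unfolding L_def
    by (rule integral_le[OF integrable_diff[OF iA iB] iL]) (rule pw)
  also have "\<dots> = dt * (- mob_form \<epsilon> T \<phi>n \<mu>n \<nu>)" using L by simp
  also have "\<dots> \<le> dt * (mob_form \<epsilon> T \<phi>n \<mu>n \<mu>n + integral \<Omega> (\<lambda>x. (norm (grad \<phi>n x))^2))"
    using mob_bound[OF ST Pn Pmu \<nu>_def] dt Om by (intro mult_left_mono) auto
  finally show ?thesis using dt by (simp add: pos_divide_le_eq mult.commute)
qed


subsection \<open>Energy estimate\<close>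

lemma P1_grad_vec:
  fixes T :: "'a::euclidean_space elem set"
  assumes ST: "struct_triang T" and f: "P1 T f" and I: "I \<in> T" and x: "x \<in> interior (cell I)"
  shows "grad f x = (\<Sum>b\<in>Basis. ((f (vtx I b) - f (fst I)) / (snd I \<bullet> b)) *\<^sub>R b)"
proof -
  have "grad f x = (\<Sum>b\<in>Basis. (grad f x \<bullet> b) *\<^sub>R b)" by (simp add: euclidean_representation)
  also have "\<dots> = (\<Sum>b\<in>Basis. ((f (vtx I b) - f (fst I)) / (snd I \<bullet> b)) *\<^sub>R b)"
    by (rule sum.cong) (simp_all add: P1_grad(2)[OF ST f I x])
  finally show ?thesis .
qed

lemma P1_cont_cell: "P1 T f \<Longrightarrow> I \<in> T \<Longrightarrow> continuous_on (cell I) f"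
  unfolding P1_def by (rule continuous_on_subset) auto

lemma Fpot_nonneg: "0 \<le> Fpot \<eta> p"
  unfolding Fpot_def by simp

lemma energy_nonneg: "0 \<le> energy \<eta> \<Omega> \<phi>"
proof (cases "(\<lambda>x. (1/2) * (norm (grad \<phi> x))^2 + Fpot \<eta> (\<phi> x)) integrable_on \<Omega>")
  case True
  show ?thesis unfolding energy_def by (rule integral_nonneg[OF True]) (simp add: Fpot_nonneg)
next
  case False
  then show ?thesis unfolding energy_def by (simp add: not_integrable_integral)
qed

lemma integrable_energy:
  fixes T :: "'a::euclidean_space elem set"
  assumes ST: "struct_triang T" and f: "P1 T \<phi>"
  shows "(\<lambda>x. (1/2) * (norm (grad \<phi> x))^2 + Fpot \<eta> (\<phi> x)) integrable_on interior (\<Union>(cell ` T))"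
    and "(\<lambda>x. (norm (grad \<phi> x))^2) integrable_on interior (\<Union>(cell ` T))"
proof -
  show "(\<lambda>x. (1/2) * (norm (grad \<phi> x))^2 + Fpot \<eta> (\<phi> x)) integrable_on interior (\<Union>(cell ` T))"
  proof (rule integrable_Omega[OF ST])
    fix I assume I: "I \<in> T"
    define a where "a = (\<Sum>b\<in>Basis. ((\<phi> (vtx I b) - \<phi> (fst I)) / (snd I \<bullet> b)) *\<^sub>R b)"
    show "(\<lambda>x. (1/2) * (norm (grad \<phi> x))^2 + Fpot \<eta> (\<phi> x)) integrable_on cell I"
    proof (rule integrable_cell_ae)
      show "continuous_on (cell I) (\<lambda>x. (1/2) * (norm a)^2 + Fpot \<eta> (\<phi> x))"
        unfolding Fpot_def using P1_cont_cell[OF f I] by (intro continuous_intros)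
      fix x assume "x \<in> interior (cell I)"
      then show "(1/2) * (norm (grad \<phi> x))^2 + Fpot \<eta> (\<phi> x) = (1/2) * (norm a)^2 + Fpot \<eta> (\<phi> x)"
        using P1_grad_vec[OF ST f I] unfolding a_def by simp
    qed
  qed
  show "(\<lambda>x. (norm (grad \<phi> x))^2) integrable_on interior (\<Union>(cell ` T))"
  proof (rule integrable_Omega[OF ST])
    fix I assume I: "I \<in> T"
    define a where "a = (\<Sum>b\<in>Basis. ((\<phi> (vtx I b) - \<phi> (fst I)) / (snd I \<bullet> b)) *\<^sub>R b)"
    show "(\<lambda>x. (norm (grad \<phi> x))^2) integrable_on cell I"
      by (rule integrable_cell_ae[where G="\<lambda>x. (norm a)^2"])
         (use P1_grad_vec[OF ST f I] a_def in auto)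
  qed
qed

lemma grad_le_energy:
  fixes T :: "'a::euclidean_space elem set"
  assumes ST: "struct_triang T" and f: "P1 T \<phi>" and Om: "\<Omega> = interior (\<Union>(cell ` T))"
  shows "integral \<Omega> (\<lambda>x. (norm (grad \<phi> x))^2) \<le> 2 * energy \<eta> \<Omega> \<phi>"
proof -
  have "integral \<Omega> (\<lambda>x. (norm (grad \<phi> x))^2) \<le> integral \<Omega> (\<lambda>x. 2 * ((1/2) * (norm (grad \<phi> x))^2 + Fpot \<eta> (\<phi> x)))"
  proof (rule integral_le)
    show "(\<lambda>x. (norm (grad \<phi> x))^2) integrable_on \<Omega>" using integrable_energy(2)[OF ST f] Om by simp
    show "(\<lambda>x. 2 * ((1/2) * (norm (grad \<phi> x))^2 + Fpot \<eta> (\<phi> x))) integrable_on \<Omega>"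
      using integrable_on_cmult_left[OF integrable_energy(1)[OF ST f, of \<eta>], of 2] Om by simp
  qed (simp add: Fpot_nonneg)
  then show ?thesis unfolding energy_def integral_mult_right .
qed

lemma mob_nonneg: "0 \<le> mob_form \<epsilon> T \<phi> \<mu> \<mu>"
  unfolding mob_form_def
proof (rule sum_nonneg)
  fix I
  define F where "F = (\<lambda>x. \<Sum>b\<in>Basis. MJ \<epsilon> \<phi> I b * (grad \<mu> x \<bullet> b) * (grad \<mu> x \<bullet> b))"
  have F: "0 \<le> F x" for x
    unfolding F_def by (intro sum_nonneg) (simp add: MJ_def mult.assoc)
  show "0 \<le> integral (cell I) (\<lambda>x. \<Sum>b\<in>Basis. MJ \<epsilon> \<phi> I b * (grad \<mu> x \<bullet> b) * (grad \<mu> x \<bullet> b))"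
    using integral_nonneg[of F "cell I"] F not_integrable_integral[of F "cell I"] unfolding F_def
    by (cases "F integrable_on cell I") (auto simp: F_def)
qed


lemma grad_diff_P1:
  fixes T :: "'a::euclidean_space elem set"
  assumes ST: "struct_triang T" and f: "P1 T f" and g: "P1 T g" and I: "I \<in> T" and x: "x \<in> interior (cell I)"
  shows "grad (\<lambda>x. f x - g x) x = grad f x - grad g x"
  by (rule grad_unique, rule GDERIV_diff) (rule P1_grad(1)[OF ST f I x], rule P1_grad(1)[OF ST g I x])

lemma vec_ineq:
  fixes a b :: "'a::real_inner"
  shows "(1/2) * (norm a)^2 - (1/2) * (norm b)^2 \<le> a \<bullet> (a - b)"
proof -
  have "0 \<le> (norm (a - b))^2" by simp
  then have "0 \<le> a \<bullet> a - 2 * (a \<bullet> b) + b \<bullet> b"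
    by (simp add: power2_norm_eq_inner inner_diff_left inner_diff_right inner_commute)
  then show ?thesis by (simp add: power2_norm_eq_inner inner_diff_right)
qed

lemma cont_G2:
  "continuous_on S f \<Longrightarrow> continuous_on S g \<Longrightarrow>
   continuous_on S (\<lambda>x. ((k::real) * (4 * f x ^ 3 - 6 * (f x)^2 + 3 * f x) + - k * g x) * (f x - g x))"
  by (intro continuous_intros)

lemma energy_step:
  fixes T :: "'a::euclidean_space elem set"
  assumes ST: "struct_triang T" and Om: "\<Omega> = interior (\<Union>(cell ` T))"
    and dt: "dt > 0"
    and old: "P1 T \<phi>o" and step: "Jscheme_step \<eta> \<epsilon> T \<Omega> dt \<phi>o \<phi>n \<mu>n"
  shows "energy \<eta> \<Omega> \<phi>n - energy \<eta> \<Omega> \<phi>o \<le> - dt * mob_form \<epsilon> T \<phi>n \<mu>n \<mu>n"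
proof -
  have Pn: "P1 T \<phi>n" and Pmu: "P1 T \<mu>n"
    and eq1: "\<And>\<mu>b. P1 T \<mu>b \<Longrightarrow> (1 / dt) * lumped T \<Omega> (\<lambda>x. \<phi>n x - \<phi>o x) \<mu>b + mob_form \<epsilon> T \<phi>n \<mu>n \<mu>b = 0"
    and eq2: "\<And>\<phi>b. P1 T \<phi>b \<Longrightarrow> integral \<Omega> (\<lambda>x. grad \<phi>n x \<bullet> grad \<phi>b x)
          + integral \<Omega> (\<lambda>x. (deriv (Fc \<eta>) (\<phi>n x) + deriv (Fe \<eta>) (\<phi>o x)) * \<phi>b x)
          = lumped T \<Omega> \<mu>n \<phi>b"
    using step unfolding Jscheme_step_def by auto
  define d where "d = (\<lambda>x. \<phi>n x - \<phi>o x)"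
  have Pd: "P1 T d" unfolding d_def by (rule P1_diff[OF Pn old])
  define G1 where "G1 = (\<lambda>x. grad \<phi>n x \<bullet> grad d x)"
  define G2 where "G2 = (\<lambda>x. (deriv (Fc \<eta>) (\<phi>n x) + deriv (Fe \<eta>) (\<phi>o x)) * d x)"
  have E2: "integral \<Omega> G1 + integral \<Omega> G2 = lumped T \<Omega> \<mu>n d"
    using eq2[OF Pd] unfolding G1_def G2_def by simp
  have comm: "lumped T \<Omega> \<mu>n d = lumped T \<Omega> d \<mu>n"
    unfolding lumped_def by (simp add: mult.commute)
  have E1: "lumped T \<Omega> d \<mu>n = - dt * mob_form \<epsilon> T \<phi>n \<mu>n \<mu>n"
    using eq1[OF Pmu] dt unfolding d_def by (simp add: field_simps)
  have iG1: "G1 integrable_on \<Omega>" unfolding Om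
  proof (rule integrable_Omega[OF ST])
    fix I assume I: "I \<in> T"
    show "G1 integrable_on cell I"
      by (rule integrable_cell_ae[where G="\<lambda>x. (\<Sum>b\<in>Basis. ((\<phi>n (vtx I b) - \<phi>n (fst I)) / (snd I \<bullet> b)) *\<^sub>R b)
            \<bullet> (\<Sum>b\<in>Basis. ((d (vtx I b) - d (fst I)) / (snd I \<bullet> b)) *\<^sub>R b)"])
         (simp_all add: G1_def P1_grad_vec[OF ST Pn I] P1_grad_vec[OF ST Pd I])
  qed
  have iG2: "G2 integrable_on \<Omega>" unfolding Om
  proof (rule integrable_Omega[OF ST])
    fix I assume I: "I \<in> T"
    show "G2 integrable_on cell I"
    proof (rule integrable_cell_ae[where G=G2])
      show "continuous_on (cell I) G2"
        unfolding G2_def deriv_Fc deriv_Fe d_def by (rule cont_G2[OF P1_cont_cell[OF Pn I] P1_cont_cell[OF old I]])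
    qed simp
  qed
  have ien: "\<And>\<phi>. P1 T \<phi> \<Longrightarrow> (\<lambda>x. (1/2) * (norm (grad \<phi> x))^2 + Fpot \<eta> (\<phi> x)) integrable_on \<Omega>"
    using integrable_energy(1)[OF ST] Om by blast
  have "energy \<eta> \<Omega> \<phi>n - energy \<eta> \<Omega> \<phi>o
     = integral \<Omega> (\<lambda>x. ((1/2) * (norm (grad \<phi>n x))^2 + Fpot \<eta> (\<phi>n x))
                      - ((1/2) * (norm (grad \<phi>o x))^2 + Fpot \<eta> (\<phi>o x)))"
    unfolding energy_def using integral_diff[OF ien[OF Pn] ien[OF old]] by simp
  also have "\<dots> \<le> integral \<Omega> (\<lambda>x. G1 x + G2 x)"
  proof (rule integral_le_ae[OF negligible_bad[OF ST]])
    show "(\<lambda>x. ((1/2) * (norm (grad \<phi>n x))^2 + Fpot \<eta> (\<phi>n x))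
                      - ((1/2) * (norm (grad \<phi>o x))^2 + Fpot \<eta> (\<phi>o x))) integrable_on \<Omega>"
      by (rule integrable_diff[OF ien[OF Pn] ien[OF old]])
    show "(\<lambda>x. G1 x + G2 x) integrable_on \<Omega>" by (rule integrable_add[OF iG1 iG2])
    fix x assume x: "x \<in> \<Omega> - bad T"
    then obtain I where I: "I \<in> T" "x \<in> interior (cell I)"
      using good_point[of x T] Om by blast
    have gd: "grad d x = grad \<phi>n x - grad \<phi>o x"
      unfolding d_def by (rule grad_diff_P1[OF ST Pn old I])
    have "(1/2) * (norm (grad \<phi>n x))^2 - (1/2) * (norm (grad \<phi>o x))^2 \<le> G1 x"
      unfolding G1_def gd by (rule vec_ineq)
    moreover have "Fpot \<eta> (\<phi>n x) - Fpot \<eta> (\<phi>o x) \<le> G2 x"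
      unfolding G2_def d_def by (rule F_ineq)
    ultimately show "((1/2) * (norm (grad \<phi>n x))^2 + Fpot \<eta> (\<phi>n x))
                      - ((1/2) * (norm (grad \<phi>o x))^2 + Fpot \<eta> (\<phi>o x)) \<le> G1 x + G2 x"
      by simp
  qed
  also have "\<dots> = integral \<Omega> G1 + integral \<Omega> G2" by (rule integral_add[OF iG1 iG2])
  finally show ?thesis using E2 comm E1 by simp
qed


theorem lemma7:
  shows
  "(\<forall>(\<T> :: ('a::euclidean_space) elem set) \<Omega> \<eta> \<epsilon> dt \<phi>old \<phi>new \<mu>new.
       DIM('a) \<le> 3 \<and> struct_triang \<T> \<and> \<Omega> = interior (\<Union>(cell ` \<T>))
       \<and> \<eta> > 0 \<and> 0 < \<epsilon> \<and> \<epsilon> < 1/2 \<and> dt > 0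
       \<and> P1 \<T> \<phi>old \<and> Jscheme_step \<eta> \<epsilon> \<T> \<Omega> dt \<phi>old \<phi>new \<mu>new
     \<longrightarrow> (integral \<Omega> (Ih \<T> (\<lambda>x. Jeps \<epsilon> (\<phi>new x)))
            - integral \<Omega> (Ih \<T> (\<lambda>x. Jeps \<epsilon> (\<phi>old x)))) / dt
         \<le> mob_form \<epsilon> \<T> \<phi>new \<mu>new \<mu>new + integral \<Omega> (\<lambda>x. (norm (grad \<phi>new x))^2))
   \<and>
   (\<exists>C1 C2 :: real \<Rightarrow> real \<Rightarrow> real.
     \<forall>(\<T> :: 'a elem set) \<Omega> \<eta> \<epsilon> (N::nat) (Tf::real) \<phi> \<mu> n.
       DIM('a) \<le> 3 \<and> struct_triang \<T> \<and> \<Omega> = interior (\<Union>(cell ` \<T>))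
       \<and> \<eta> > 0 \<and> 0 < \<epsilon> \<and> \<epsilon> < 1/2 \<and> N > 0 \<and> Tf > 0
       \<and> P1 \<T> (\<phi> 0)
       \<and> (\<forall>m<N. Jscheme_step \<eta> \<epsilon> \<T> \<Omega> (Tf / real N) (\<phi> m) (\<phi> (Suc m)) (\<mu> (Suc m)))
       \<and> n < N
     \<longrightarrow> integral \<Omega> (Ih \<T> (\<lambda>x. Jeps \<epsilon> (\<phi> (Suc n) x)))
         \<le> C1 (energy \<eta> \<Omega> (\<phi> 0)) (integral \<Omega> (Ih \<T> (\<lambda>x. Jeps \<epsilon> (\<phi> 0 x))))
           + C2 (energy \<eta> \<Omega> (\<phi> 0)) (integral \<Omega> (Ih \<T> (\<lambda>x. Jeps \<epsilon> (\<phi> 0 x)))) * Tf)"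
proof (intro conjI)
  show "\<forall>(\<T> :: ('a::euclidean_space) elem set) \<Omega> \<eta> \<epsilon> dt \<phi>old \<phi>new \<mu>new.
       DIM('a) \<le> 3 \<and> struct_triang \<T> \<and> \<Omega> = interior (\<Union>(cell ` \<T>))
       \<and> \<eta> > 0 \<and> 0 < \<epsilon> \<and> \<epsilon> < 1/2 \<and> dt > 0
       \<and> P1 \<T> \<phi>old \<and> Jscheme_step \<eta> \<epsilon> \<T> \<Omega> dt \<phi>old \<phi>new \<mu>new
     \<longrightarrow> (integral \<Omega> (Ih \<T> (\<lambda>x. Jeps \<epsilon> (\<phi>new x)))
            - integral \<Omega> (Ih \<T> (\<lambda>x. Jeps \<epsilon> (\<phi>old x)))) / dt
         \<le> mob_form \<epsilon> \<T> \<phi>new \<mu>new \<mu>new + integral \<Omega> (\<lambda>x. (norm (grad \<phi>new x))^2)"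
    by (intro allI impI, elim conjE) (rule part1; assumption)
next
  show "\<exists>C1 C2 :: real \<Rightarrow> real \<Rightarrow> real.
     \<forall>(\<T> :: 'a elem set) \<Omega> \<eta> \<epsilon> (N::nat) (Tf::real) \<phi> \<mu> n.
       DIM('a) \<le> 3 \<and> struct_triang \<T> \<and> \<Omega> = interior (\<Union>(cell ` \<T>))
       \<and> \<eta> > 0 \<and> 0 < \<epsilon> \<and> \<epsilon> < 1/2 \<and> N > 0 \<and> Tf > 0
       \<and> P1 \<T> (\<phi> 0)
       \<and> (\<forall>m<N. Jscheme_step \<eta> \<epsilon> \<T> \<Omega> (Tf / real N) (\<phi> m) (\<phi> (Suc m)) (\<mu> (Suc m)))
       \<and> n < N
     \<longrightarrow> integral \<Omega> (Ih \<T> (\<lambda>x. Jeps \<epsilon> (\<phi> (Suc n) x)))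
         \<le> C1 (energy \<eta> \<Omega> (\<phi> 0)) (integral \<Omega> (Ih \<T> (\<lambda>x. Jeps \<epsilon> (\<phi> 0 x))))
           + C2 (energy \<eta> \<Omega> (\<phi> 0)) (integral \<Omega> (Ih \<T> (\<lambda>x. Jeps \<epsilon> (\<phi> 0 x)))) * Tf"
  proof (intro exI allI impI)
    fix T :: "'a elem set" and \<Omega> \<eta> \<epsilon> and N :: nat and Tf :: real and \<phi> \<mu> n
    assume A: "DIM('a) \<le> 3 \<and> struct_triang T \<and> \<Omega> = interior (\<Union>(cell ` T))
       \<and> \<eta> > 0 \<and> 0 < \<epsilon> \<and> \<epsilon> < 1/2 \<and> N > 0 \<and> Tf > 0
       \<and> P1 T (\<phi> 0)
       \<and> (\<forall>m<N. Jscheme_step \<eta> \<epsilon> T \<Omega> (Tf / real N) (\<phi> m) (\<phi> (Suc m)) (\<mu> (Suc m)))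
       \<and> n < N"
    then have ST: "struct_triang T" and Om: "\<Omega> = interior (\<Union>(cell ` T))"
      and e: "0 < \<epsilon>" "\<epsilon> < 1/2" and N: "N > 0" and Tf: "Tf > 0" and P0: "P1 T (\<phi> 0)"
      and steps: "\<And>m. m < N \<Longrightarrow> Jscheme_step \<eta> \<epsilon> T \<Omega> (Tf / real N) (\<phi> m) (\<phi> (Suc m)) (\<mu> (Suc m))"
      and n: "n < N" by auto
    define dt where "dt = Tf / real N"
    have dt: "dt > 0" unfolding dt_def using N Tf by simp
    define J where "J = (\<lambda>m. integral \<Omega> (Ih T (\<lambda>x. Jeps \<epsilon> (\<phi> m x))))"
    define E where "E = (\<lambda>m. energy \<eta> \<Omega> (\<phi> m))"
    have P: "P1 T (\<phi> m)" if "m \<le> N" for m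
    proof (cases m)
      case 0 then show ?thesis using P0 by simp
    next
      case (Suc k)
      then have "k < N" using that by simp
      then show ?thesis using steps[of k] Suc unfolding Jscheme_step_def by simp
    qed
    have E0: "\<And>m. 0 \<le> E m" unfolding E_def by (rule energy_nonneg)
    have key: "J (Suc k) + E (Suc k) \<le> J k + E k + 2 * dt * E 0 \<and> E (Suc k) \<le> E k"
      if k: "k < N" and Ek: "E k \<le> E 0" for k
    proof -
      have st: "Jscheme_step \<eta> \<epsilon> T \<Omega> dt (\<phi> k) (\<phi> (Suc k)) (\<mu> (Suc k))"
        using steps[OF k] unfolding dt_def .
      have Pk: "P1 T (\<phi> k)" using P k by simp
      have PSk: "P1 T (\<phi> (Suc k))" using P k by simp
      define M where "M = mob_form \<epsilon> T (\<phi> (Suc k)) (\<mu> (Suc k)) (\<mu> (Suc k))"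
      define G where "G = integral \<Omega> (\<lambda>x. (norm (grad (\<phi> (Suc k)) x))^2)"
      have p1: "(J (Suc k) - J k) / dt \<le> M + G"
        unfolding J_def M_def G_def by (rule part1[OF ST Om e dt Pk st])
      then have p1': "J (Suc k) - J k \<le> dt * (M + G)" using dt by (simp add: pos_divide_le_eq mult.commute)
      have en: "E (Suc k) - E k \<le> - dt * M"
        unfolding E_def M_def by (rule energy_step[OF ST Om dt Pk st])
      have M0: "0 \<le> M" unfolding M_def by (rule mob_nonneg)
      have GE: "G \<le> 2 * E (Suc k)" unfolding G_def E_def by (rule grad_le_energy[OF ST PSk Om])
      have "0 \<le> dt * M" using dt M0 by simp
      then have ESk: "E (Suc k) \<le> E k" using en by linarith
      have "dt * G \<le> dt * (2 * E 0)" using GE ESk Ek dt by (intro mult_left_mono) auto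
      then show ?thesis using p1' en ESk by (simp add: algebra_simps)
    qed
    have ind: "k \<le> N \<Longrightarrow> J k + E k \<le> J 0 + E 0 + 2 * real k * dt * E 0 \<and> E k \<le> E 0" for k
    proof (induction k)
      case 0 then show ?case by simp
    next
      case (Suc k)
      then have IH: "J k + E k \<le> J 0 + E 0 + 2 * real k * dt * E 0" "E k \<le> E 0" by auto
      have "k < N" using Suc by simp
      then have "J (Suc k) + E (Suc k) \<le> J k + E k + 2 * dt * E 0 \<and> E (Suc k) \<le> E k"
        using key IH(2) by blast
      then show ?case using IH by (simp add: algebra_simps)
    qed
    have I: "J (Suc n) + E (Suc n) \<le> J 0 + E 0 + 2 * real (Suc n) * dt * E 0"
      using ind[of "Suc n"] n by simp
    have "real (Suc n) * dt \<le> real N * dt" using n dt by (intro mult_right_mono) auto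
    also have "real N * dt = Tf" unfolding dt_def using N by simp
    finally have "real (Suc n) * dt * E 0 \<le> Tf * E 0"
      using E0[of 0] by (rule mult_right_mono)
    then have "2 * real (Suc n) * dt * E 0 \<le> 2 * Tf * E 0" by (simp only: mult.assoc)
    then have "J (Suc n) \<le> J 0 + E 0 + 2 * E 0 * Tf" using I E0[of "Suc n"] by (simp add: algebra_simps)
    then show "integral \<Omega> (Ih T (\<lambda>x. Jeps \<epsilon> (\<phi> (Suc n) x)))
         \<le> (\<lambda>e j. j + e) (energy \<eta> \<Omega> (\<phi> 0)) (integral \<Omega> (Ih T (\<lambda>x. Jeps \<epsilon> (\<phi> 0 x))))
           + (\<lambda>e j. 2 * e) (energy \<eta> \<Omega> (\<phi> 0)) (integral \<Omega> (Ih T (\<lambda>x. Jeps \<epsilon> (\<phi> 0 x)))) * Tf"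
      unfolding J_def E_def by simp
  qed
qed

end
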